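(* For every $n\geq 2$ there exists a finitely generated subgroup $H\leqslant F_n\times F_n$ such that $\mathrm{Ord}_H(F_n\times F_n)=\mathbb{N}$. In particular, $F_n\times F_n$ does not have bounded subgroup spectra.
   Context: $F_n$ is the free group of rank $n$; $\mathbb{N}$ contains $0$. For a group $G$, a subset $S\subseteq G$ and $g\in G$, $\mathrm{Ord}_S(g)=\min\{k\geq 1: g^k\in S\}$ if such $k$ exists and $0$ otherwise; $\mathrm{Ord}_S(G)=\{\mathrm{Ord}_S(g):g\in G\}$. A group has bounded subgroup spectra if $\mathrm{Ord}_H(G)$ is bounded for every finitely generated $H\leqslant G$. *)

theory Defs
  imports "HOL-Algebra.Algebra"
begin

text \<open>Free group of rank n, modelled by freely reduced words over the letters
  x_0, ..., x_(n-1) and their inverses. A letter (i, False) stands for x_i and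
  (i, True) for its inverse.\<close>

type_synonym fg_word = "(nat \<times> bool) list"

definition fg_inverse_letter :: "nat \<times> bool \<Rightarrow> nat \<times> bool \<Rightarrow> bool" where
  "fg_inverse_letter x y \<longleftrightarrow> fst x = fst y \<and> snd x \<noteq> snd y"

fun fg_reduced :: "fg_word \<Rightarrow> bool" where
  "fg_reduced [] = True"
| "fg_reduced [x] = True"
| "fg_reduced (x # y # ws) = (\<not> fg_inverse_letter x y \<and> fg_reduced (y # ws))"

fun fg_cons :: "nat \<times> bool \<Rightarrow> fg_word \<Rightarrow> fg_word" where
  "fg_cons x [] = [x]"
| "fg_cons x (y # ws) = (if fg_inverse_letter x y then ws else x # y # ws)"

definition fg_reduce :: "fg_word \<Rightarrow> fg_word" where
  "fg_reduce ws = foldr fg_cons ws []"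

definition free_group :: "nat \<Rightarrow> fg_word monoid" where
  "free_group n = \<lparr> carrier = {ws. (\<forall>x \<in> set ws. fst x < n) \<and> fg_reduced ws},
                    monoid.mult = (\<lambda>u v. fg_reduce (u @ v)),
                    monoid.one = [] \<rparr>"

definition fin_gen_subgroup :: "('a, 'b) monoid_scheme \<Rightarrow> 'a set \<Rightarrow> bool" where
  "fin_gen_subgroup G H \<longleftrightarrow> subgroup H G \<and>
     (\<exists>S. finite S \<and> S \<subseteq> carrier G \<and> H = generate G S)"

definition Ord_in :: "('a, 'b) monoid_scheme \<Rightarrow> 'a set \<Rightarrow> 'a \<Rightarrow> nat" where
  "Ord_in G S g = (if \<exists>k::nat\<ge>1. g [^]\<^bsub>G\<^esub> k \<in> S
                    then (LEAST k::nat. k \<ge> 1 \<and> g [^]\<^bsub>G\<^esub> k \<in> S) else 0)"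

definition Ord_spectrum :: "('a, 'b) monoid_scheme \<Rightarrow> 'a set \<Rightarrow> nat set" where
  "Ord_spectrum G S = Ord_in G S ` carrier G"

definition bounded_subgroup_spectra :: "('a, 'b) monoid_scheme \<Rightarrow> bool" where
  "bounded_subgroup_spectra G \<longleftrightarrow>
     (\<forall>H. fin_gen_subgroup G H \<longrightarrow> (\<exists>B. \<forall>k \<in> Ord_spectrum G H. k \<le> B))"

end

theory Submission
  imports Defs
begin


definition flipl :: "nat \<times> bool \<Rightarrow> nat \<times> bool" where
  "flipl x = (fst x, \<not> snd x)"

lemma inv_letter_iff: "fg_inverse_letter x y \<longleftrightarrow> y = flipl x"
  by (cases x; cases y) (auto simp: fg_inverse_letter_def flipl_def)

lemma flipl_flipl[simp]: "flipl (flipl x) = x"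
  by (cases x) (simp add: flipl_def)

lemma fst_flipl[simp]: "fst (flipl x) = fst x"
  by (simp add: flipl_def)

lemma red_tl: "fg_reduced (x # w) \<Longrightarrow> fg_reduced w"
  by (cases w) auto

lemma red_cons: "fg_reduced (x # w) \<longleftrightarrow> fg_reduced w \<and> (w = [] \<or> hd w \<noteq> flipl x)"
  by (cases w) (auto simp: inv_letter_iff)

lemma fg_cons_red: "fg_reduced w \<Longrightarrow> fg_reduced (fg_cons x w)"
  by (cases w) (auto simp: red_cons inv_letter_iff dest: red_tl)

lemma fg_cons_cancel: "fg_reduced w \<Longrightarrow> fg_cons (flipl x) (fg_cons x w) = w"
proof (cases w)
  case Nil then show ?thesis by (simp add: inv_letter_iff)
next
  case (Cons y w')
  assume r: "fg_reduced w"
  show ?thesis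
  proof (cases "y = flipl x")
    case True
    then have "fg_cons x w = w'" using Cons by (simp add: inv_letter_iff)
    moreover have "fg_cons (flipl x) w' = y # w'"
      using r Cons True by (cases w') (auto simp: inv_letter_iff red_cons)
    ultimately show ?thesis using Cons by simp
  next
    case False
    then show ?thesis using Cons by (simp add: inv_letter_iff)
  qed
qed

lemma fg_cons_cancel': "fg_reduced w \<Longrightarrow> fg_cons x (fg_cons (flipl x) w) = w"
  using fg_cons_cancel[of w "flipl x"] by simp

abbreviation RR :: "fg_word \<Rightarrow> fg_word \<Rightarrow> fg_word" where
  "RR l w \<equiv> foldr fg_cons l w"

lemma RR_red: "fg_reduced w \<Longrightarrow> fg_reduced (RR l w)"
  by (induction l) (auto intro: fg_cons_red)

lemma RR_fg_cons: 
  assumes "fg_reduced u" "fg_reduced w"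
  shows "RR (fg_cons x u) w = fg_cons x (RR u w)"
proof (cases u)
  case Nil then show ?thesis by simp
next
  case (Cons y u')
  show ?thesis
  proof (cases "y = flipl x")
    case True
    have "fg_reduced (RR u' w)" using assms by (intro RR_red) 
    then have "fg_cons x (fg_cons y (RR u' w)) = RR u' w"
      using True fg_cons_cancel' by simp
    then show ?thesis using Cons True by (simp add: inv_letter_iff)
  next
    case False
    then show ?thesis using Cons by (simp add: inv_letter_iff)
  qed
qed

lemma RR_RR: "fg_reduced w \<Longrightarrow> RR (RR u []) w = RR u w"
proof (induction u)
  case Nil then show ?case by simp
next
  case (Cons x u)
  have "RR (RR (x # u) []) w = RR (fg_cons x (RR u [])) w" by simp
  also have "\<dots> = fg_cons x (RR (RR u []) w)"
    by (rule RR_fg_cons) (auto intro: RR_red Cons)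
  finally show ?case using Cons by simp
qed

lemma RR_id: "fg_reduced w \<Longrightarrow> RR w [] = w"
proof (induction w)
  case Nil then show ?case by simp
next
  case (Cons x w)
  then have "RR w [] = w" by (auto dest: red_tl)
  then show ?case using Cons.prems by (cases w) (auto simp: inv_letter_iff red_cons)
qed

lemma RR_letters: "set (RR l w) \<subseteq> set l \<union> set w"
proof (induction l)
  case Nil then show ?case by simp
next
  case (Cons x l)
  then show ?case by (cases "RR l w") auto
qed

lemma red_snoc: "fg_reduced (ws @ [y]) \<Longrightarrow> \<not> fg_inverse_letter y z \<Longrightarrow> fg_reduced (ws @ [y, z])"
proof (induction ws)
  case Nil then show ?case by simp
next
  case (Cons a ws)
  then show ?case by (cases ws) auto
qed

definition fg_inv :: "fg_word \<Rightarrow> fg_word" where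
  "fg_inv w = rev (map flipl w)"

lemma RR_inv: "fg_reduced w \<Longrightarrow> RR (fg_inv w) w = []"
proof (induction w)
  case Nil then show ?case by (simp add: fg_inv_def)
next
  case (Cons x w)
  have "RR (fg_inv (x # w)) (x # w) = RR (fg_inv w) (fg_cons (flipl x) (x # w))"
    by (simp add: fg_inv_def)
  also have "fg_cons (flipl x) (x # w) = w" by (simp add: inv_letter_iff)
  finally show ?case using Cons by (auto dest: red_tl)
qed

lemma fg_inv_red: "fg_reduced w \<Longrightarrow> fg_reduced (fg_inv w)"
proof (induction w rule: fg_reduced.induct)
  case 1 then show ?case by (simp add: fg_inv_def)
next
  case (2 x) then show ?case by (simp add: fg_inv_def)
next
  case (3 x y ws)
  have "fg_reduced (fg_inv (y # ws))" using 3 by auto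
  moreover have "fg_inv (x # y # ws) = fg_inv (y # ws) @ [flipl x]" by (simp add: fg_inv_def)
  moreover have "fg_inv (y # ws) = fg_inv ws @ [flipl y]" by (simp add: fg_inv_def)
  moreover have "\<not> fg_inverse_letter (flipl y) (flipl x)"
    using 3(2) by (cases x; cases y) (auto simp: fg_inverse_letter_def flipl_def)
  ultimately show ?case
    by (simp add: red_snoc)
qed

lemma fg_mult: "u \<otimes>\<^bsub>free_group n\<^esub> v = RR u (RR v [])"
  by (simp add: free_group_def fg_reduce_def)

lemma fg_one: "\<one>\<^bsub>free_group n\<^esub> = []"
  by (simp add: free_group_def)

lemma fg_carrier: "carrier (free_group n) = {ws. (\<forall>x \<in> set ws. fst x < n) \<and> fg_reduced ws}"
  by (simp add: free_group_def)

lemma fg_group: "group (free_group n)"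
proof (rule groupI)
  fix x y assume x: "x \<in> carrier (free_group n)" and y: "y \<in> carrier (free_group n)"
  show "x \<otimes>\<^bsub>free_group n\<^esub> y \<in> carrier (free_group n)"
    using x y RR_letters[of x "RR y []"] RR_letters[of y "[]"] RR_red[of "RR y []" x] RR_red[of "[]" y]
    by (auto simp: fg_mult fg_carrier)
next
  show "\<one>\<^bsub>free_group n\<^esub> \<in> carrier (free_group n)" by (simp add: fg_one fg_carrier)
next
  fix x y z assume x: "x \<in> carrier (free_group n)" and y: "y \<in> carrier (free_group n)"
    and z: "z \<in> carrier (free_group n)"
  have rz: "fg_reduced (RR z [])" by (rule RR_red) simp
  have ry: "fg_reduced (RR y (RR z []))" by (rule RR_red) (rule rz)
  show "x \<otimes>\<^bsub>free_group n\<^esub> y \<otimes>\<^bsub>free_group n\<^esub> z =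
        x \<otimes>\<^bsub>free_group n\<^esub> (y \<otimes>\<^bsub>free_group n\<^esub> z)"
  proof -
    have "RR (RR x (RR y [])) (RR z []) = RR (RR (x @ y) []) (RR z [])" by simp
    also have "\<dots> = RR (x @ y) (RR z [])" by (rule RR_RR[OF rz])
    also have "\<dots> = RR x (RR (RR y (RR z [])) [])" using RR_id[OF ry] by simp
    finally show ?thesis unfolding fg_mult .
  qed
next
  fix x assume x: "x \<in> carrier (free_group n)"
  then show "\<one>\<^bsub>free_group n\<^esub> \<otimes>\<^bsub>free_group n\<^esub> x = x"
    by (simp add: fg_one fg_mult fg_carrier RR_id)
next
  fix x assume x: "x \<in> carrier (free_group n)"
  then have rx: "fg_reduced x" and lx: "\<forall>a \<in> set x. fst a < n" by (auto simp: fg_carrier)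
  have "fg_inv x \<in> carrier (free_group n)"
    using rx lx fg_inv_red[OF rx] by (auto simp: fg_carrier fg_inv_def)
  moreover have "fg_inv x \<otimes>\<^bsub>free_group n\<^esub> x = \<one>\<^bsub>free_group n\<^esub>"
    using rx by (simp add: fg_mult fg_one RR_id RR_inv)
  ultimately show "\<exists>y \<in> carrier (free_group n). y \<otimes>\<^bsub>free_group n\<^esub> x = \<one>\<^bsub>free_group n\<^esub>"
    by blast
qed

lemma fg_letter_carrier: "fst x < n \<Longrightarrow> [x] \<in> carrier (free_group n)"
  by (simp add: fg_carrier)

lemma fg_letter_mult: "fg_reduced w \<Longrightarrow> [x] \<otimes>\<^bsub>free_group n\<^esub> w = fg_cons x w"
  by (simp add: fg_mult RR_id)




type_synonym strm = "nat \<Rightarrow> bool"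

definition sc :: "bool \<Rightarrow> strm \<Rightarrow> strm" where
  "sc b s = (\<lambda>n. case n of 0 \<Rightarrow> b | Suc m \<Rightarrow> s m)"

definition stl :: "strm \<Rightarrow> strm" where
  "stl s = (\<lambda>n. s (Suc n))"

lemma sc_0[simp]: "sc b s 0 = b" by (simp add: sc_def)
lemma sc_Suc[simp]: "sc b s (Suc n) = s n" by (simp add: sc_def)
lemma stl_sc[simp]: "stl (sc b s) = s" by (simp add: sc_def stl_def)
lemma sc_exp: "sc (s 0) (stl s) = s" by (rule ext) (simp add: sc_def stl_def split: nat.split)
lemma sc_inj[simp]: "sc a s = sc b t \<longleftrightarrow> a = b \<and> s = t"
proof
  assume h: "sc a s = sc b t"
  have "a = b" using fun_cong[OF h, of 0] by simp
  moreover have "s = t" using arg_cong[OF h, of stl] by simp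
  ultimately show "a = b \<and> s = t" by simp
qed simp

definition Am :: "strm \<Rightarrow> strm" where
  "Am s = (if s 0 then (if s 1 then stl s else sc False (sc True (stl (stl s)))) else sc False s)"
definition Ai :: "strm \<Rightarrow> strm" where
  "Ai s = (if s 0 then sc True s else (if s 1 then sc True (sc False (stl (stl s))) else stl s))"
definition Bm :: "strm \<Rightarrow> strm" where
  "Bm s = (if s 0 then sc True (Am (stl s)) else s)"
definition Bi :: "strm \<Rightarrow> strm" where
  "Bi s = (if s 0 then sc True (Ai (stl s)) else s)"
definition Cm :: "strm \<Rightarrow> strm" where
  "Cm s = (if s 0 then (if s 1 then sc True (sc False (stl (stl s))) else sc False (stl (stl s))) else sc True (sc True (stl s)))"
definition Ci :: "strm \<Rightarrow> strm" where
  "Ci s = (if s 0 then (if s 1 then sc False (stl (stl s)) else sc True (sc True (stl (stl s)))) else sc True (sc False (stl s)))"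

lemma stl_def': "stl s n = s (Suc n)" by (simp add: stl_def)

lemma pref5: "(\<And>b0 b1 b2 b3 b4 t. f (sc b0 (sc b1 (sc b2 (sc b3 (sc b4 t))))) = g (sc b0 (sc b1 (sc b2 (sc b3 (sc b4 t)))))) \<Longrightarrow> f = g"
proof (rule ext)
  fix s
  assume h: "\<And>b0 b1 b2 b3 b4 t. f (sc b0 (sc b1 (sc b2 (sc b3 (sc b4 t))))) = g (sc b0 (sc b1 (sc b2 (sc b3 (sc b4 t)))))"
  have e: "s = sc (s 0) (sc (stl s 0) (sc (stl (stl s) 0) (sc (stl (stl (stl s)) 0) (sc (stl (stl (stl (stl s))) 0) (stl (stl (stl (stl (stl s)))))))))"
    by (simp only: sc_exp)
  show "f s = g s" by (subst e, subst (2) e, rule h)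
qed

lemmas mdefs = Am_def Ai_def Bm_def Bi_def Cm_def Ci_def

lemma Am_c[simp]: "Am (sc False s) = sc False (sc False s)" "Am (sc True (sc False s)) = sc False (sc True s)"
  "Am (sc True (sc True s)) = sc True s" by (simp_all add: Am_def)
lemma Ai_c[simp]: "Ai (sc False (sc False s)) = sc False s" "Ai (sc False (sc True s)) = sc True (sc False s)"
  "Ai (sc True s) = sc True (sc True s)" by (simp_all add: Ai_def)
lemma Bm_c[simp]: "Bm (sc False s) = sc False s" "Bm (sc True s) = sc True (Am s)" by (simp_all add: Bm_def)
lemma Bi_c[simp]: "Bi (sc False s) = sc False s" "Bi (sc True s) = sc True (Ai s)" by (simp_all add: Bi_def)
lemma Cm_c[simp]: "Cm (sc False s) = sc True (sc True s)" "Cm (sc True (sc False s)) = sc False s"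
  "Cm (sc True (sc True s)) = sc True (sc False s)" by (simp_all add: Cm_def)
lemma Ci_c[simp]: "Ci (sc True (sc True s)) = sc False s" "Ci (sc False s) = sc True (sc False s)"
  "Ci (sc True (sc False s)) = sc True (sc True s)" by (simp_all add: Ci_def)

lemma Aeq: "Cm \<circ> Bm \<circ> Ci \<circ> Bm = Am"
  apply (rule pref5)
  apply (case_tac b0; case_tac b1; case_tac b2; case_tac b3; case_tac b4; simp)
  done

lemma inv_facts: "Am \<circ> Ai = id" "Ai \<circ> Am = id" "Bm \<circ> Bi = id" "Bi \<circ> Bm = id"
  "Cm \<circ> Ci = id" "Ci \<circ> Cm = id"
  by (rule pref5, case_tac b0; case_tac b1; case_tac b2; case_tac b3; case_tac b4; simp)+

lemma H1s: "(Am \<circ> Bi) \<circ> (Ai \<circ> Bm \<circ> Am) = (Ai \<circ> Bm \<circ> Am) \<circ> (Am \<circ> Bi)"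
  by (rule pref5, case_tac b0; case_tac b1; case_tac b2; case_tac b3; case_tac b4; simp)
lemma H2s: "(Am \<circ> Bi) \<circ> (Ai \<circ> Ai \<circ> Bm \<circ> Am \<circ> Am) = (Ai \<circ> Ai \<circ> Bm \<circ> Am \<circ> Am) \<circ> (Am \<circ> Bi)"
  by (rule pref5, case_tac b0; case_tac b1; case_tac b2; case_tac b3; case_tac b4; simp)
lemma H3s: "Bm \<circ> (Ai \<circ> Cm \<circ> Bm) = Cm"
  by (rule pref5, case_tac b0; case_tac b1; case_tac b2; case_tac b3; case_tac b4; simp)
lemma H4s: "Bm \<circ> (Ai \<circ> (Ai \<circ> Cm \<circ> Bm) \<circ> Bm) = (Ai \<circ> Cm \<circ> Bm) \<circ> (Ai \<circ> Bm \<circ> Am)"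
  by (rule pref5, case_tac b0; case_tac b1; case_tac b2; case_tac b3; case_tac b4; simp)
lemma H5s: "Am \<circ> Cm \<circ> Am = Cm \<circ> Cm"
  by (rule pref5, case_tac b0; case_tac b1; case_tac b2; case_tac b3; case_tac b4; simp)
lemma H6s: "(Am \<circ> Cm) \<circ> (Am \<circ> Cm) = id"
  by (rule pref5, case_tac b0; case_tac b1; case_tac b2; case_tac b3; case_tac b4; simp)




fun ones :: "nat \<Rightarrow> strm \<Rightarrow> strm" where
  "ones 0 w = w"
| "ones (Suc k) w = sc True (ones k w)"

fun Cs :: "nat \<Rightarrow> strm \<Rightarrow> strm" where
  "Cs 0 = Am \<circ> Cm"
| "Cs (Suc 0) = Cm"
| "Cs (Suc (Suc k)) = Ai \<circ> Cs (Suc k) \<circ> Bm"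

lemma Cs_closed:
  "Cs n (sc False w) = ones (n+1) w \<and>
   (\<forall>i w. 1 \<le> i \<longrightarrow> i \<le> n \<longrightarrow> Cs n (ones i (sc False w)) = ones (i-1) (sc False w)) \<and>
   (\<forall>w. Cs n (ones (n+1) w) = ones n (sc False w))"
proof (induction n arbitrary: w rule: nat_less_induct)
  case (1 n)
  show ?case
  proof (cases n)
    case 0
    have c3: "Cs 0 (sc True w') = sc False w'" for w'
    proof -
      have "w' = sc (w' 0) (stl w')" by (simp add: sc_exp)
      then obtain b t where "w' = sc b t" by metis
      then show ?thesis by (cases b) simp_all
    qed
    show ?thesis using 0 c3 by simp
  next
    case (Suc m)
    show ?thesis
    proof (cases m)
      case 0
      have c2: "Cs 1 (ones i (sc False w')) = ones (i-1) (sc False w')" if "1 \<le> i" "i \<le> 1" for i w'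
        using that by (cases i) auto
      show ?thesis using Suc 0 c2 by simp
    next
      case (Suc k)
      have IH: "Cs m (sc False w') = ones (m+1) w'"
        "\<And>i w'. 1 \<le> i \<Longrightarrow> i \<le> m \<Longrightarrow> Cs m (ones i (sc False w')) = ones (i-1) (sc False w')"
        "\<And>w'. Cs m (ones (m+1) w') = ones m (sc False w')" for w'
        using 1[rule_format, of m] \<open>n = Suc m\<close> by auto
      have nm: "Cs n = Ai \<circ> Cs m \<circ> Bm" using \<open>n = Suc m\<close> Suc by simp
      have nm': "Cs (Suc m) = Ai \<circ> Cs m \<circ> Bm" using Suc by simp
      have a: "Cs n (sc False w) = ones (n+1) w"
        using IH(1)[of w] \<open>n = Suc m\<close> by (simp add: nm nm')
      have b: "Cs n (ones i (sc False w')) = ones (i-1) (sc False w')" if i12: "1 \<le> i" "i \<le> n" for i w'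
      proof -
        consider "i = 1" | "i = 2" | j where "i = Suc (Suc (Suc j))"
        proof -
          obtain p where "i = Suc p" using i12 by (cases i) auto
          then show thesis using that
            by (cases p; cases "p - 1") (auto simp: numeral_2_eq_2)
        qed
        then show ?thesis
        proof cases
          case 1
          have "Cs m (ones 1 (sc False (sc False w'))) = ones 0 (sc False (sc False w'))"
            using IH(2)[of 1] Suc by simp
          then show ?thesis using 1 by (simp add: nm nm')
        next
          case 2
          have "Cs m (ones 1 (sc False (sc True w'))) = ones 0 (sc False (sc True w'))"
            using IH(2)[of 1] Suc by simp
          then show ?thesis using 2 by (simp add: nm nm' numeral_2_eq_2)
        next
          case 3
          have "Cs m (ones (Suc (Suc j)) (sc False w')) = ones (Suc j) (sc False w')"
            using IH(2)[of "Suc (Suc j)"] i12 3 \<open>n = Suc m\<close> by simp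
          then show ?thesis using 3 by (simp add: nm nm')
        qed
      qed
      have c: "Cs n (ones (n+1) w') = ones n (sc False w')" for w'
      proof -
        have "Cs m (ones (m+1) w') = ones m (sc False w')" by (rule IH(3))
        then show ?thesis using \<open>n = Suc m\<close> Suc by (simp add: nm nm')
      qed
      show ?thesis using a b c by blast
    qed
  qed
qed

definition zeros :: strm where "zeros = (\<lambda>_. False)"

lemma sc_zeros: "sc False zeros = zeros"
  by (rule ext) (simp add: zeros_def sc_def split: nat.split)

lemma Cs_orbit: "1 \<le> j \<Longrightarrow> j \<le> n + 2 \<Longrightarrow> (Cs n ^^ j) zeros = ones (n + 2 - j) zeros"
proof (induction j rule: nat_induct_at_least)
  case base
  then show ?case using Cs_closed[of n zeros] by (simp add: sc_zeros)
next
  case (Suc j)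
  have "(Cs n ^^ Suc j) zeros = Cs n (ones (n + 2 - j) zeros)" using Suc by simp
  also have "\<dots> = ones (n + 2 - Suc j) zeros"
  proof (cases "j = 1")
    case True
    then show ?thesis using Cs_closed[of n zeros] by (simp add: sc_zeros)
  next
    case False
    then have "1 \<le> n + 2 - j" "n + 2 - j \<le> n" using Suc by auto
    have "Cs n (ones (n + 2 - j) (sc False zeros)) = ones (n + 2 - j - 1) (sc False zeros)"
      using Cs_closed[of n zeros] \<open>1 \<le> n + 2 - j\<close> \<open>n + 2 - j \<le> n\<close> by blast
    moreover have "n + 2 - j - 1 = n + 2 - Suc j" by simp
    ultimately show ?thesis by (simp add: sc_zeros)
  qed
  finally show ?case .
qed

lemma ones_hd: "k \<ge> 1 \<Longrightarrow> ones k w 0 = True"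
  by (cases k) auto

lemma Cs_order: "1 \<le> j \<Longrightarrow> j \<le> n + 1 \<Longrightarrow> (Cs n ^^ j) \<noteq> id"
proof
  assume "1 \<le> j" "j \<le> n + 1" "(Cs n ^^ j) = id"
  then have "ones (n + 2 - j) zeros = zeros" using Cs_orbit[of j n] by simp
  moreover have "ones (n + 2 - j) zeros 0 = True" using \<open>j \<le> n + 1\<close> by (intro ones_hd) simp
  ultimately show False by (simp add: zeros_def)
qed

fun fz :: "nat \<Rightarrow> strm \<Rightarrow> strm" where
  "fz 0 x = x"
| "fz (Suc j) x = sc False (fz j x)"

lemma Bm_pow: "(Bm ^^ j) (sc True (sc False x)) = sc True (sc False (fz j x))"
  by (induction j) auto

lemma Bm_order: "j \<ge> 1 \<Longrightarrow> (Bm ^^ j) \<noteq> id"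
proof
  assume "j \<ge> 1" "Bm ^^ j = id"
  then have "fz j (\<lambda>_. True) = (\<lambda>_. True)" using Bm_pow[of j "\<lambda>_. True"] by simp
  moreover have "fz j (\<lambda>_. True) 0 = False" using \<open>j \<ge> 1\<close> by (cases j) auto
  ultimately show False by simp
qed




definition aa :: "('a, 'b) monoid_scheme \<Rightarrow> 'a \<Rightarrow> 'a \<Rightarrow> 'a" where
  "aa G b c = c \<otimes>\<^bsub>G\<^esub> b \<otimes>\<^bsub>G\<^esub> inv\<^bsub>G\<^esub> c \<otimes>\<^bsub>G\<^esub> b"

fun XX :: "('a, 'b) monoid_scheme \<Rightarrow> 'a \<Rightarrow> 'a \<Rightarrow> nat \<Rightarrow> 'a" where
  "XX G b c 0 = aa G b c"
| "XX G b c (Suc 0) = b"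
| "XX G b c (Suc (Suc k)) = inv\<^bsub>G\<^esub> (aa G b c) \<otimes>\<^bsub>G\<^esub> XX G b c (Suc k) \<otimes>\<^bsub>G\<^esub> aa G b c"

fun CC :: "('a, 'b) monoid_scheme \<Rightarrow> 'a \<Rightarrow> 'a \<Rightarrow> nat \<Rightarrow> 'a" where
  "CC G b c 0 = aa G b c \<otimes>\<^bsub>G\<^esub> c"
| "CC G b c (Suc 0) = c"
| "CC G b c (Suc (Suc k)) = inv\<^bsub>G\<^esub> (aa G b c) \<otimes>\<^bsub>G\<^esub> CC G b c (Suc k) \<otimes>\<^bsub>G\<^esub> b"

locale relgrp = group G for G (structure) +
  fixes b c
  assumes b: "b \<in> carrier G" and c: "c \<in> carrier G"
  assumes H1: "(aa G b c \<otimes> inv b) \<otimes> XX G b c 2 = XX G b c 2 \<otimes> (aa G b c \<otimes> inv b)"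
  and H2: "(aa G b c \<otimes> inv b) \<otimes> XX G b c 3 = XX G b c 3 \<otimes> (aa G b c \<otimes> inv b)"
  and H3: "b \<otimes> CC G b c 2 = c"
  and H4: "b \<otimes> CC G b c 3 = CC G b c 2 \<otimes> XX G b c 2"
  and H5: "CC G b c 0 \<otimes> aa G b c = c \<otimes> c"
  and H6: "CC G b c 0 \<otimes> CC G b c 0 = \<one>"
begin

abbreviation "ag \<equiv> aa G b c"
abbreviation "Xg \<equiv> XX G b c"
abbreviation "Cg \<equiv> CC G b c"

lemma a_c[simp]: "ag \<in> carrier G" by (simp add: aa_def b c)

lemma X_c0: "Xg k \<in> carrier G \<and> Xg (Suc k) \<in> carrier G"
  by (induction k) (auto simp: b)
lemma X_c[simp]: "Xg k \<in> carrier G" using X_c0 by blast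

lemma C_c0: "Cg k \<in> carrier G \<and> Cg (Suc k) \<in> carrier G"
  by (induction k) (auto simp: b c)
lemma C_c[simp]: "Cg k \<in> carrier G" using C_c0 by blast

lemma canc1: "x \<in> carrier G \<Longrightarrow> y \<in> carrier G \<Longrightarrow> x \<otimes> (inv x \<otimes> y) = y"
  by (simp add: m_assoc[symmetric])
lemma canc2: "x \<in> carrier G \<Longrightarrow> y \<in> carrier G \<Longrightarrow> inv x \<otimes> (x \<otimes> y) = y"
  by (simp add: m_assoc[symmetric])

lemmas gs = m_assoc canc1 canc2 inv_mult_group

lemma Xs: "m \<ge> 1 \<Longrightarrow> Xg (Suc m) = inv ag \<otimes> Xg m \<otimes> ag"
  by (cases m) auto

lemma Cs': "m \<ge> 1 \<Longrightarrow> Cg (Suc m) = inv ag \<otimes> Cg m \<otimes> b"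
  by (cases m) auto

lemma X2: "Xg 2 = inv ag \<otimes> b \<otimes> ag" by (simp add: numeral_2_eq_2)

lemma comm_conj:
  assumes "x \<in> carrier G" "y \<in> carrier G" "z \<in> carrier G"
    and h: "(x \<otimes> inv y) \<otimes> z = z \<otimes> (x \<otimes> inv y)"
  shows "inv y \<otimes> z \<otimes> y = inv x \<otimes> z \<otimes> x"
proof -
  have "inv y \<otimes> z \<otimes> y = inv x \<otimes> ((x \<otimes> inv y) \<otimes> z) \<otimes> y" using assms(1-3) by (simp add: gs)
  also have "\<dots> = inv x \<otimes> (z \<otimes> (x \<otimes> inv y)) \<otimes> y" using h by simp
  also have "\<dots> = inv x \<otimes> z \<otimes> x" using assms(1-3) by (simp add: gs)
  finally show ?thesis .
qed

definition "commd z \<longleftrightarrow> (ag \<otimes> inv b) \<otimes> z = z \<otimes> (ag \<otimes> inv b)"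

lemma commd_mult: "x \<in> carrier G \<Longrightarrow> y \<in> carrier G \<Longrightarrow> commd x \<Longrightarrow> commd y \<Longrightarrow> commd (x \<otimes> y)"
  unfolding commd_def
  by (metis a_c b inv_closed m_assoc m_closed)

lemma commd_inv: "x \<in> carrier G \<Longrightarrow> commd x \<Longrightarrow> commd (inv x)"
  unfolding commd_def
proof -
  assume x: "x \<in> carrier G" and h: "ag \<otimes> inv b \<otimes> x = x \<otimes> (ag \<otimes> inv b)"
  have "inv x \<otimes> (ag \<otimes> inv b \<otimes> x) \<otimes> inv x = inv x \<otimes> (x \<otimes> (ag \<otimes> inv b)) \<otimes> inv x" using h by simp
  then show "ag \<otimes> inv b \<otimes> inv x = inv x \<otimes> (ag \<otimes> inv b)" using x b by (simp add: gs)
qed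

lemma P: "m \<ge> 2 \<Longrightarrow> commd (Xg m)"
proof (induction m rule: less_induct)
  case (less m)
  consider "m = 2" | "m = 3" | "m \<ge> 4" using less.prems by linarith
  then show ?case
  proof cases
    case 1 then show ?thesis using H1 by (simp add: commd_def)
  next
    case 2 then show ?thesis using H2 by (simp add: commd_def)
  next
    case 3
    have c2: "commd (Xg (m - 2))" using less.IH[of "m - 2"] 3 by simp
    have c1: "commd (Xg (m - 1))" using less.IH[of "m - 1"] 3 by simp
    have c0: "commd (Xg 2)" using H1 by (simp add: commd_def)
    have R: "inv b \<otimes> Xg (m - 2) \<otimes> b = inv ag \<otimes> Xg (m - 2) \<otimes> ag"
      using comm_conj[of ag b "Xg (m - 2)"] c2 b by (simp add: commd_def)
    have e1: "Xg (m - 1) = inv ag \<otimes> Xg (m - 2) \<otimes> ag"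
      using Xs[of "m - 2"] 3 by (simp add: Suc_diff_Suc numeral_2_eq_2)
    have e2: "Xg m = inv ag \<otimes> Xg (m - 1) \<otimes> ag"
      using Xs[of "m - 1"] 3 by simp
    have "inv (Xg 2) \<otimes> Xg (m - 1) \<otimes> Xg 2 = inv ag \<otimes> inv b \<otimes> ag \<otimes> (inv ag \<otimes> Xg (m - 2) \<otimes> ag) \<otimes> (inv ag \<otimes> b \<otimes> ag)"
      unfolding X2 e1 using b by (simp add: gs)
    also have "\<dots> = inv ag \<otimes> (inv b \<otimes> Xg (m - 2) \<otimes> b) \<otimes> ag"
      using b by (simp add: gs)
    also have "\<dots> = Xg m" unfolding e2 R e1 ..
    finally have "Xg m = inv (Xg 2) \<otimes> Xg (m - 1) \<otimes> Xg 2" by simp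
    then show ?thesis
      using c0 c1 by (simp add: commd_mult commd_inv)
  qed
qed

lemma Rm: "m \<ge> 2 \<Longrightarrow> inv b \<otimes> Xg m \<otimes> b = Xg (Suc m)"
  using comm_conj[of ag b "Xg m"] P[of m] b Xs[of m] by (simp add: commd_def)

lemma F1: "k < m \<Longrightarrow> Xg m \<otimes> Xg k = Xg k \<otimes> Xg (Suc m)"
proof (induction k arbitrary: m rule: less_induct)
  case (less k)
  show ?case
  proof (cases k)
    case 0
    then show ?thesis using less.prems Xs[of m] by (simp add: gs)
  next
    case (Suc k')
    show ?thesis
    proof (cases k')
      case 0
      then have "Xg k = b" using Suc by simp
      moreover have "Xg (Suc m) = inv b \<otimes> Xg m \<otimes> b" using Rm[of m] less.prems Suc 0 by simp
      ultimately show ?thesis using b by (simp add: gs)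
    next
      case (Suc k'')
      have IH: "Xg (m - 1) \<otimes> Xg k' = Xg k' \<otimes> Xg m"
        using less.IH[of k' "m - 1"] less.prems \<open>k = Suc k'\<close> by simp
      have e1: "Xg k = inv ag \<otimes> Xg k' \<otimes> ag" using Xs[of k'] \<open>k = Suc k'\<close> Suc by simp
      have e2: "Xg m = inv ag \<otimes> Xg (m - 1) \<otimes> ag" using Xs[of "m - 1"] less.prems \<open>k = Suc k'\<close> Suc by simp
      have e3: "Xg (Suc m) = inv ag \<otimes> Xg m \<otimes> ag" using Xs[of m] less.prems by simp
      have "Xg m \<otimes> Xg k = inv ag \<otimes> (Xg (m - 1) \<otimes> Xg k') \<otimes> ag"
        unfolding e1 e2 by (simp add: gs)
      also have "\<dots> = inv ag \<otimes> (Xg k' \<otimes> Xg m) \<otimes> ag" using IH by simp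
      also have "\<dots> = Xg k \<otimes> Xg (Suc m)"
        unfolding e1 e3 by (simp add: gs)
      finally show ?thesis .
    qed
  qed
qed

lemma L4: "Xg n \<otimes> Cg (Suc n) = Cg n"
proof (induction n)
  case 0 then show ?case by simp
next
  case (Suc n)
  show ?case
  proof (cases n)
    case 0 then show ?thesis using H3 by (simp add: numeral_2_eq_2)
  next
    case (Suc k)
    have "Xg (Suc n) \<otimes> Cg (Suc (Suc n)) = inv ag \<otimes> (Xg n \<otimes> Cg (Suc n)) \<otimes> b"
      using Xs[of n] Cs'[of "Suc n"] Suc b by (simp add: gs)
    also have "\<dots> = Cg (Suc n)" using Suc.IH Cs'[of n] Suc by simp
    finally show ?thesis .
  qed
qed

lemma L4': "Cg (Suc n) = inv (Xg n) \<otimes> Cg n"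
proof -
  have "inv (Xg n) \<otimes> Cg n = inv (Xg n) \<otimes> (Xg n \<otimes> Cg (Suc n))" using L4[of n] by simp
  also have "\<dots> = Cg (Suc n)" by (simp add: gs)
  finally show ?thesis by simp
qed

lemma E: "Xg m \<otimes> Cg (Suc (Suc m)) = Cg (Suc m) \<otimes> Xg (Suc m)"
proof (induction m)
  case 0 then show ?case using b c by (simp add: gs)
next
  case (Suc m)
  show ?case
  proof (cases m)
    case 0 then show ?thesis using H4 by (simp add: numeral_2_eq_2 numeral_3_eq_3)
  next
    case (Suc k)
    have f: "Xg (Suc m) \<otimes> b = b \<otimes> Xg (Suc (Suc m))"
      using F1[of 1 "Suc m"] Suc by simp
    have "Xg (Suc m) \<otimes> Cg (Suc (Suc (Suc m))) = inv ag \<otimes> (Xg m \<otimes> Cg (Suc (Suc m))) \<otimes> b"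
      using Xs[of m] Cs'[of "Suc (Suc m)"] Suc b by (simp add: gs)
    also have "\<dots> = inv ag \<otimes> Cg (Suc m) \<otimes> (Xg (Suc m) \<otimes> b)" using Suc.IH b by (simp add: gs)
    also have "\<dots> = inv ag \<otimes> Cg (Suc m) \<otimes> (b \<otimes> Xg (Suc (Suc m)))" using f by simp
    also have "\<dots> = Cg (Suc (Suc m)) \<otimes> Xg (Suc (Suc m))"
      using Cs'[of "Suc m"] Xs[of "Suc m"] b by (simp add: gs)
    finally show ?thesis .
  qed
qed

lemma L2: "k < n \<Longrightarrow> Xg k \<otimes> Cg (Suc n) = Cg n \<otimes> Xg (Suc k)"
proof (induction n)
  case 0 then show ?case by simp
next
  case (Suc n)
  show ?case
  proof (cases "k = n")
    case True then show ?thesis using E[of n] by simp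
  next
    case False
    then have kn: "k < n" using Suc.prems by simp
    have f: "Xg n \<otimes> Xg k = Xg k \<otimes> Xg (Suc n)" using F1[OF kn] .
    have f': "Xg k \<otimes> inv (Xg (Suc n)) = inv (Xg n) \<otimes> Xg k"
    proof -
      have "Xg k \<otimes> inv (Xg (Suc n)) = inv (Xg n) \<otimes> (Xg n \<otimes> Xg k) \<otimes> inv (Xg (Suc n))"
        by (simp add: gs)
      also have "\<dots> = inv (Xg n) \<otimes> Xg k" unfolding f by (simp add: gs)
      finally show ?thesis .
    qed
    have "Xg k \<otimes> Cg (Suc (Suc n)) = Xg k \<otimes> inv (Xg (Suc n)) \<otimes> Cg (Suc n)"
      using L4'[of "Suc n"] by (simp add: gs)
    also have "\<dots> = inv (Xg n) \<otimes> (Xg k \<otimes> Cg (Suc n))" unfolding f' by (simp add: gs)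
    also have "\<dots> = inv (Xg n) \<otimes> Cg n \<otimes> Xg (Suc k)" using Suc.IH[OF kn] by (simp add: gs)
    also have "\<dots> = Cg (Suc n) \<otimes> Xg (Suc k)" using L4'[of n] by simp
    finally show ?thesis .
  qed
qed

lemma L3: "Cg m \<otimes> ag = Cg (Suc m) \<otimes> Cg (Suc m)"
proof (induction m)
  case 0 then show ?case using H5 by simp
next
  case (Suc m)
  have e: "Xg m \<otimes> inv (Xg (Suc m)) \<otimes> Cg (Suc m) = Cg (Suc m) \<otimes> Xg (Suc m)"
    using E[of m] L4'[of "Suc m"] by (simp add: gs)
  have e': "Cg (Suc m) \<otimes> inv (Xg (Suc m)) = Xg (Suc m) \<otimes> inv (Xg m) \<otimes> Cg (Suc m)"
  proof -
    have "Cg (Suc m) \<otimes> inv (Xg (Suc m)) = Xg (Suc m) \<otimes> inv (Xg m) \<otimes> (Xg m \<otimes> inv (Xg (Suc m)) \<otimes> Cg (Suc m)) \<otimes> inv (Xg (Suc m))"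
      by (simp add: gs)
    also have "\<dots> = Xg (Suc m) \<otimes> inv (Xg m) \<otimes> Cg (Suc m)" unfolding e by (simp add: gs)
    finally show ?thesis .
  qed
  have "Cg (Suc (Suc m)) \<otimes> Cg (Suc (Suc m)) = inv (Xg (Suc m)) \<otimes> (Cg (Suc m) \<otimes> inv (Xg (Suc m))) \<otimes> Cg (Suc m)"
    using L4'[of "Suc m"] by (simp add: gs)
  also have "\<dots> = inv (Xg m) \<otimes> (Cg m \<otimes> ag)" unfolding e' Suc.IH by (simp add: gs)
  also have "\<dots> = Cg (Suc m) \<otimes> ag" using L4'[of m] by (simp add: gs)
  finally show ?case by simp
qed

lemma Lpow: "1 \<le> j \<Longrightarrow> j \<le> Suc n \<Longrightarrow> Cg (Suc n) [^] (Suc j) = Cg n [^] j \<otimes> Xg (j - 1)"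
proof (induction j rule: nat_induct_at_least)
  case base
  then show ?case using L3[of n] by (simp add: numeral_2_eq_2)
next
  case (Suc j)
  have "Cg (Suc n) [^] Suc (Suc j) = Cg n [^] j \<otimes> (Xg (j - 1) \<otimes> Cg (Suc n))"
    using Suc by (simp add: gs)
  also have "\<dots> = Cg n [^] j \<otimes> (Cg n \<otimes> Xg j)"
    using L2[of "j - 1" n] Suc by simp
  also have "\<dots> = Cg n [^] Suc j \<otimes> Xg (Suc j - 1)" by (simp add: gs)
  finally show ?case .
qed

lemma torsion: "Cg n [^] (Suc (Suc n)) = \<one>"
proof (induction n)
  case 0 then show ?case using H6 using c by (simp add: numeral_2_eq_2)
next
  case (Suc n)
  have "Cg (Suc n) [^] Suc (Suc (Suc n)) = Cg (Suc n) [^] Suc (Suc n) \<otimes> Cg (Suc n)" by simp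
  also have "\<dots> = Cg n [^] Suc n \<otimes> (Xg n \<otimes> Cg (Suc n))" using Lpow[of "Suc n" n] by (simp add: gs)
  also have "\<dots> = Cg n [^] Suc (Suc n)" using L4[of n] by (simp add: gs)
  finally show ?case using Suc.IH by simp
qed

end


lemma XX_closed: "group G \<Longrightarrow> b \<in> carrier G \<Longrightarrow> c \<in> carrier G \<Longrightarrow> XX G b c k \<in> carrier G \<and> XX G b c (Suc k) \<in> carrier G"
  by (induction k) (auto simp: aa_def group.subgroup_self intro!: monoid.m_closed group.is_monoid group.inv_closed)

lemma CC_closed: "group G \<Longrightarrow> b \<in> carrier G \<Longrightarrow> c \<in> carrier G \<Longrightarrow> CC G b c k \<in> carrier G \<and> CC G b c (Suc k) \<in> carrier G"
  by (induction k) (auto simp: aa_def intro!: monoid.m_closed group.is_monoid group.inv_closed)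

lemma aa_closed: "group G \<Longrightarrow> b \<in> carrier G \<Longrightarrow> c \<in> carrier G \<Longrightarrow> aa G b c \<in> carrier G"
  by (auto simp: aa_def intro!: monoid.m_closed group.is_monoid group.inv_closed)

lemma (in group_hom) hom_aa: "b \<in> carrier G \<Longrightarrow> c \<in> carrier G \<Longrightarrow> h (aa G b c) = aa H (h b) (h c)"
  by (simp add: aa_def)

lemma (in group_hom) hom_XX: "b \<in> carrier G \<Longrightarrow> c \<in> carrier G \<Longrightarrow> h (XX G b c k) = XX H (h b) (h c) k \<and> h (XX G b c (Suc k)) = XX H (h b) (h c) (Suc k)"
proof (induction k)
  case 0 then show ?case by (simp add: hom_aa)
next
  case (Suc k)
  have cl: "XX G b c (Suc k) \<in> carrier G" using XX_closed[OF G.is_group Suc.prems] by blast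
  have "aa G b c \<in> carrier G" using aa_closed[OF G.is_group Suc.prems] .
  then show ?case using Suc cl by (simp add: hom_aa)
qed

lemma (in group_hom) hom_CC: "b \<in> carrier G \<Longrightarrow> c \<in> carrier G \<Longrightarrow> h (CC G b c k) = CC H (h b) (h c) k \<and> h (CC G b c (Suc k)) = CC H (h b) (h c) (Suc k)"
proof (induction k)
  case 0
  have "aa G b c \<in> carrier G" using aa_closed[OF G.is_group 0] .
  then show ?case using 0 by (simp add: hom_aa)
next
  case (Suc k)
  have cl: "CC G b c (Suc k) \<in> carrier G" using CC_closed[OF G.is_group Suc.prems] by blast
  have "aa G b c \<in> carrier G" using aa_closed[OF G.is_group Suc.prems] .
  then show ?case using Suc cl by (simp add: hom_aa)
qed

fun relL :: "('a, 'b) monoid_scheme \<Rightarrow> 'a \<Rightarrow> 'a \<Rightarrow> nat \<Rightarrow> 'a" where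
  "relL G b c 0 = (aa G b c \<otimes>\<^bsub>G\<^esub> inv\<^bsub>G\<^esub> b) \<otimes>\<^bsub>G\<^esub> XX G b c 2"
| "relL G b c (Suc 0) = (aa G b c \<otimes>\<^bsub>G\<^esub> inv\<^bsub>G\<^esub> b) \<otimes>\<^bsub>G\<^esub> XX G b c 3"
| "relL G b c (Suc (Suc 0)) = b \<otimes>\<^bsub>G\<^esub> CC G b c 2"
| "relL G b c (Suc (Suc (Suc 0))) = b \<otimes>\<^bsub>G\<^esub> CC G b c 3"
| "relL G b c (Suc (Suc (Suc (Suc 0)))) = CC G b c 0 \<otimes>\<^bsub>G\<^esub> aa G b c"
| "relL G b c (Suc (Suc (Suc (Suc (Suc k))))) = CC G b c 0 \<otimes>\<^bsub>G\<^esub> CC G b c 0"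

fun relR :: "('a, 'b) monoid_scheme \<Rightarrow> 'a \<Rightarrow> 'a \<Rightarrow> nat \<Rightarrow> 'a" where
  "relR G b c 0 = XX G b c 2 \<otimes>\<^bsub>G\<^esub> (aa G b c \<otimes>\<^bsub>G\<^esub> inv\<^bsub>G\<^esub> b)"
| "relR G b c (Suc 0) = XX G b c 3 \<otimes>\<^bsub>G\<^esub> (aa G b c \<otimes>\<^bsub>G\<^esub> inv\<^bsub>G\<^esub> b)"
| "relR G b c (Suc (Suc 0)) = c"
| "relR G b c (Suc (Suc (Suc 0))) = CC G b c 2 \<otimes>\<^bsub>G\<^esub> XX G b c 2"
| "relR G b c (Suc (Suc (Suc (Suc 0)))) = c \<otimes>\<^bsub>G\<^esub> c"
| "relR G b c (Suc (Suc (Suc (Suc (Suc k))))) = \<one>\<^bsub>G\<^esub>"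

lemma relgrpI:
  assumes "group G" "b \<in> carrier G" "c \<in> carrier G" "\<And>i. i < 6 \<Longrightarrow> relL G b c i = relR G b c i"
  shows "relgrp G b c"
proof -
  have e: "relL G b c i = relR G b c i" if "i < 6" for i using assms(4) that .
  show ?thesis
    apply (rule relgrp.intro[OF assms(1)])
    apply (rule relgrp_axioms.intro)
    using assms(2,3) e[of 0] e[of 1] e[of 2] e[of 3] e[of 4] e[of 5]
    by (simp_all add: numeral_eq_Suc)
qed

lemma relL_closed: "group G \<Longrightarrow> b \<in> carrier G \<Longrightarrow> c \<in> carrier G \<Longrightarrow> relL G b c i \<in> carrier G"
  using XX_closed[of G b c] CC_closed[of G b c] aa_closed[of G b c]
  by (cases "(G,b,c,i)" rule: relL.cases) (auto intro!: monoid.m_closed group.is_monoid group.inv_closed)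

lemma relR_closed: "group G \<Longrightarrow> b \<in> carrier G \<Longrightarrow> c \<in> carrier G \<Longrightarrow> relR G b c i \<in> carrier G"
  using XX_closed[of G b c] CC_closed[of G b c] aa_closed[of G b c]
  by (cases "(G,b,c,i)" rule: relR.cases) (auto intro!: monoid.m_closed group.is_monoid group.inv_closed monoid.one_closed)

lemma (in group_hom) hom_relL: "b \<in> carrier G \<Longrightarrow> c \<in> carrier G \<Longrightarrow> h (relL G b c i) = relL H (h b) (h c) i"
  using hom_XX[of b c] hom_CC[of b c] hom_aa[of b c] XX_closed[OF G.is_group, of b c] CC_closed[OF G.is_group, of b c]
    aa_closed[OF G.is_group, of b c]
  by (cases "(G,b,c,i)" rule: relL.cases) (simp_all add: numeral_eq_Suc)

lemma (in group_hom) hom_relR: "b \<in> carrier G \<Longrightarrow> c \<in> carrier G \<Longrightarrow> h (relR G b c i) = relR H (h b) (h c) i"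
  using hom_XX[of b c] hom_CC[of b c] hom_aa[of b c] XX_closed[OF G.is_group, of b c] CC_closed[OF G.is_group, of b c]
    aa_closed[OF G.is_group, of b c]
  by (cases "(G,b,c,i)" rule: relR.cases) (simp_all add: numeral_eq_Suc)




definition bF :: fg_word where "bF = [(0, False)]"
definition cF :: fg_word where "cF = [(1, False)]"

definition relset :: "nat \<Rightarrow> (fg_word \<times> fg_word) set" where
  "relset n = (\<lambda>i. (relL (free_group n) bF cF i \<otimes>\<^bsub>free_group n\<^esub> inv\<^bsub>free_group n\<^esub> relR (free_group n) bF cF i, [])) ` {..<6}"

definition diagset :: "nat \<Rightarrow> (fg_word \<times> fg_word) set" where
  "diagset n = (\<lambda>i. ([(i, False)], [(i, False)])) ` {..<n}"

definition Sset :: "nat \<Rightarrow> (fg_word \<times> fg_word) set" where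
  "Sset n = diagset n \<union> relset n"

definition Hsub :: "nat \<Rightarrow> (fg_word \<times> fg_word) set" where
  "Hsub n = generate (free_group n \<times>\<times> free_group n) (Sset n)"

lemma grpF: "group (free_group n)" by (rule fg_group)
lemma grpGG: "group (free_group n \<times>\<times> free_group n)" by (rule DirProd_group[OF fg_group fg_group])

lemma bF_c: "n \<ge> 2 \<Longrightarrow> bF \<in> carrier (free_group n)" by (simp add: bF_def fg_carrier)
lemma cF_c: "n \<ge> 2 \<Longrightarrow> cF \<in> carrier (free_group n)" by (simp add: cF_def fg_carrier)

lemma rel_c: "n \<ge> 2 \<Longrightarrow> relL (free_group n) bF cF i \<otimes>\<^bsub>free_group n\<^esub> inv\<^bsub>free_group n\<^esub> relR (free_group n) bF cF i \<in> carrier (free_group n)"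
  using relL_closed[OF grpF bF_c cF_c] relR_closed[OF grpF bF_c cF_c]
  by (intro monoid.m_closed group.is_monoid[OF grpF] group.inv_closed[OF grpF]) auto

lemma Sset_c: "n \<ge> 2 \<Longrightarrow> Sset n \<subseteq> carrier (free_group n \<times>\<times> free_group n)"
  using rel_c[of n] fg_letter_carrier[of _ n]
  by (auto simp: Sset_def diagset_def relset_def fg_carrier)

lemma Sset_fin: "finite (Sset n)"
  by (simp add: Sset_def diagset_def relset_def)

lemma Hsub_sg: "n \<ge> 2 \<Longrightarrow> subgroup (Hsub n) (free_group n \<times>\<times> free_group n)"
  unfolding Hsub_def by (rule group.generate_is_subgroup[OF grpGG Sset_c])


definition lt :: "nat \<times> bool \<Rightarrow> strm \<Rightarrow> strm" where
  "lt x = (if fst x = 0 then (if snd x then Bi else Bm) else if fst x = 1 then (if snd x then Ci else Cm) else id)"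

fun Phi :: "fg_word \<Rightarrow> strm \<Rightarrow> strm" where
  "Phi [] = id"
| "Phi (x # w) = lt x \<circ> Phi w"

lemma lt_cancel: "lt x \<circ> lt (flipl x) = id"
  using inv_facts by (cases x) (auto simp: lt_def flipl_def)

lemma Phi_cons: "Phi (fg_cons x w) = lt x \<circ> Phi w"
proof (cases w)
  case Nil then show ?thesis by simp
next
  case (Cons y w')
  show ?thesis
  proof (cases "y = flipl x")
    case True
    then have "lt x \<circ> Phi w = (lt x \<circ> lt (flipl x)) \<circ> Phi w'" using Cons by (simp add: o_assoc)
    then show ?thesis using Cons True lt_cancel by (simp add: inv_letter_iff)
  next
    case False then show ?thesis using Cons by (simp add: inv_letter_iff)
  qed
qed

lemma Phi_RR: "Phi (RR l w) = Phi l \<circ> Phi w"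
  by (induction l) (auto simp: Phi_cons o_assoc)

lemma Phi_mult: "Phi (u \<otimes>\<^bsub>free_group n\<^esub> v) = Phi u \<circ> Phi v"
  by (simp add: fg_mult Phi_RR)

lemma Phi_one: "Phi \<one>\<^bsub>free_group n\<^esub> = id"
  by (simp add: fg_one)

lemma Phi_inv_l: "u \<in> carrier (free_group n) \<Longrightarrow> Phi (inv\<^bsub>free_group n\<^esub> u) \<circ> Phi u = id"
  using group.l_inv[OF grpF] Phi_mult[symmetric, where u="inv\<^bsub>free_group n\<^esub> u" and n=n and v=u] Phi_one[of n] by simp

lemma Phi_inv_r: "u \<in> carrier (free_group n) \<Longrightarrow> Phi u \<circ> Phi (inv\<^bsub>free_group n\<^esub> u) = id"
  using group.r_inv[OF grpF] Phi_mult[symmetric, where u=u and n=n and v="inv\<^bsub>free_group n\<^esub> u"] Phi_one[of n] by simp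

lemma Phi_inv_eq: "u \<in> carrier (free_group n) \<Longrightarrow> Phi u \<circ> g = id \<Longrightarrow> Phi (inv\<^bsub>free_group n\<^esub> u) = g"
proof -
  assume u: "u \<in> carrier (free_group n)" and h: "Phi u \<circ> g = id"
  have "Phi (inv\<^bsub>free_group n\<^esub> u) = Phi (inv\<^bsub>free_group n\<^esub> u) \<circ> (Phi u \<circ> g)" using h by simp
  also have "\<dots> = (Phi (inv\<^bsub>free_group n\<^esub> u) \<circ> Phi u) \<circ> g" by (simp add: o_assoc)
  also have "\<dots> = g" using Phi_inv_l[OF u] by simp
  finally show ?thesis .
qed

lemma Phi_inv_cong: "u \<in> carrier (free_group n) \<Longrightarrow> v \<in> carrier (free_group n) \<Longrightarrow> Phi u = Phi v \<Longrightarrow>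
   Phi (inv\<^bsub>free_group n\<^esub> u) = Phi (inv\<^bsub>free_group n\<^esub> v)"
  using Phi_inv_eq[of u n "Phi (inv\<^bsub>free_group n\<^esub> v)"] Phi_inv_r[of v n] by simp

lemma Phi_pow: "Phi (u [^]\<^bsub>free_group n\<^esub> (k::nat)) = Phi u ^^ k"
  by (induction k) (simp_all add: Phi_mult Phi_one funpow_Suc_right del: funpow.simps)

fun Xsem :: "nat \<Rightarrow> strm \<Rightarrow> strm" where
  "Xsem 0 = Am"
| "Xsem (Suc 0) = Bm"
| "Xsem (Suc (Suc k)) = Ai \<circ> Xsem (Suc k) \<circ> Am"

context
  fixes n :: nat
  assumes n2: "n \<ge> 2"
begin

lemma Phi_b: "Phi bF = Bm" by (simp add: bF_def lt_def)
lemma Phi_c: "Phi cF = Cm" by (simp add: cF_def lt_def)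
lemma Phi_bi: "Phi (inv\<^bsub>free_group n\<^esub> bF) = Bi"
  using Phi_inv_eq[OF bF_c[OF n2]] inv_facts by (simp add: Phi_b)
lemma Phi_ci: "Phi (inv\<^bsub>free_group n\<^esub> cF) = Ci"
  using Phi_inv_eq[OF cF_c[OF n2]] inv_facts by (simp add: Phi_c)
lemma Phi_a: "Phi (aa (free_group n) bF cF) = Am"
  using Aeq by (simp add: aa_def Phi_mult Phi_b Phi_c Phi_ci o_assoc)
lemma aF_c: "aa (free_group n) bF cF \<in> carrier (free_group n)"
  using aa_closed[OF grpF bF_c[OF n2] cF_c[OF n2]] .
lemma Phi_ai: "Phi (inv\<^bsub>free_group n\<^esub> (aa (free_group n) bF cF)) = Ai"
  using Phi_inv_eq[OF aF_c] inv_facts by (simp add: Phi_a)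

lemma Phi_XX: "Phi (XX (free_group n) bF cF k) = Xsem k \<and> Phi (XX (free_group n) bF cF (Suc k)) = Xsem (Suc k)"
  by (induction k) (simp_all add: Phi_mult Phi_a Phi_ai Phi_b o_assoc)

lemma Phi_CC: "Phi (CC (free_group n) bF cF k) = Cs k \<and> Phi (CC (free_group n) bF cF (Suc k)) = Cs (Suc k)"
  by (induction k) (simp_all add: Phi_mult Phi_a Phi_ai Phi_b Phi_c o_assoc)

lemma Phi_rel: "i < 6 \<Longrightarrow> Phi (relL (free_group n) bF cF i) = Phi (relR (free_group n) bF cF i)"
proof -
  assume "i < 6"
  then consider "i = 0" | "i = 1" | "i = 2" | "i = 3" | "i = 4" | "i = 5" by linarith
  then show ?thesis
  proof cases
    case 1 then show ?thesis using H1s Phi_XX[of 2] by (simp add: Phi_mult Phi_a Phi_bi o_assoc numeral_eq_Suc)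
  next
    case 2 then show ?thesis using H2s Phi_XX[of 3] by (simp add: Phi_mult Phi_a Phi_bi o_assoc numeral_eq_Suc)
  next
    case 3 then show ?thesis using H3s Phi_CC[of 2] by (simp add: Phi_mult Phi_a Phi_ai Phi_b Phi_c o_assoc numeral_eq_Suc)
  next
    case 4 then show ?thesis using H4s Phi_CC[of 3] Phi_XX[of 2] by (simp add: Phi_mult Phi_a Phi_ai Phi_b Phi_c o_assoc numeral_eq_Suc)
  next
    case 5 then show ?thesis using H5s by (simp add: Phi_mult Phi_a Phi_c o_assoc numeral_eq_Suc)
  next
    case 6 then show ?thesis using H6s by (simp add: Phi_mult Phi_a Phi_c Phi_one o_assoc numeral_eq_Suc fg_one)
  qed
qed

end


lemma Phi_relset: "n \<ge> 2 \<Longrightarrow> i < 6 \<Longrightarrow>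
  Phi (relL (free_group n) bF cF i \<otimes>\<^bsub>free_group n\<^esub> inv\<^bsub>free_group n\<^esub> relR (free_group n) bF cF i) = id"
  using Phi_rel[of n i] Phi_inv_r[OF relR_closed[OF grpF bF_c cF_c], of n i]
  by (simp add: Phi_mult)

lemma Hsub_inv: assumes n2: "n \<ge> 2" and hH: "h \<in> Hsub n" shows "Phi (fst h) = Phi (snd h)"
  using hH unfolding Hsub_def
proof (induction rule: generate.induct)
  case one then show ?case by (simp add: fg_one)
next
  case (incl h)
  then show ?case using Phi_relset[OF n2] by (auto simp: Sset_def diagset_def relset_def)
next
  case (inv h)
  have hc: "h \<in> carrier (free_group n \<times>\<times> free_group n)" using Sset_c[OF n2] inv by blast
  then obtain u v where huv: "h = (u, v)" "u \<in> carrier (free_group n)" "v \<in> carrier (free_group n)" by auto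
  have "Phi u = Phi v" using inv huv Phi_relset[OF n2] by (auto simp: Sset_def diagset_def relset_def)
  then show ?case using huv Phi_inv_cong[of u n v] inv_DirProd[OF grpF grpF] by simp
next
  case (eng h1 h2)
  then show ?case by (simp add: mult_DirProd' Phi_mult)
qed

lemma fg_inv_letter: "fst x < n \<Longrightarrow> inv\<^bsub>free_group n\<^esub> [(fst x, False)] = [(fst x, True)]"
  by (rule group.inv_equality[OF grpF]) (auto simp: fg_mult fg_one fg_carrier inv_letter_iff flipl_def)

lemma diag_in: "n \<ge> 2 \<Longrightarrow> g \<in> carrier (free_group n) \<Longrightarrow> (g, g) \<in> Hsub n"
proof (induction g)
  case Nil
  then show ?case using generate.one[of "free_group n \<times>\<times> free_group n" "Sset n"] by (simp add: Hsub_def fg_one)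
next
  case (Cons x w)
  have wc: "w \<in> carrier (free_group n)" and xl: "fst x < n" and rxw: "fg_reduced (x # w)"
    using Cons.prems by (auto simp: fg_carrier dest: red_tl)
  have xw: "x # w = [x] \<otimes>\<^bsub>free_group n\<^esub> w"
  proof -
    have "fg_cons x w = x # w" using rxw by (cases w) (auto simp: inv_letter_iff red_cons)
    then show ?thesis using fg_letter_mult[where w=w and x=x and n=n] rxw by (simp add: red_tl[OF rxw])
  qed
  have gen: "([(fst x, False)], [(fst x, False)]) \<in> Hsub n"
    using xl unfolding Hsub_def by (intro generate.incl) (auto simp: Sset_def diagset_def)
  have xx: "([x], [x]) \<in> Hsub n"
  proof (cases "snd x")
    case False
    then have "x = (fst x, False)" by (cases x) auto
    then show ?thesis using gen by metis
  next
    case True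
    then have xe: "x = (fst x, True)" by (cases x) auto
    have "inv\<^bsub>free_group n \<times>\<times> free_group n\<^esub> ([(fst x, False)], [(fst x, False)]) \<in> Hsub n"
      using xl unfolding Hsub_def by (intro generate.inv) (auto simp: Sset_def diagset_def)
    then show ?thesis using inv_DirProd[OF grpF grpF] fg_letter_carrier[of "(fst x, False)" n] xl fg_inv_letter[OF xl] xe
      by simp
  qed
  have "(w, w) \<in> Hsub n" using Cons wc by blast
  then have "([x], [x]) \<otimes>\<^bsub>free_group n \<times>\<times> free_group n\<^esub> (w, w) \<in> Hsub n"
    using xx unfolding Hsub_def by (intro generate.eng)
  then show ?case using xw by simp
qed

definition Nsub :: "nat \<Rightarrow> fg_word set" where
  "Nsub n = {u \<in> carrier (free_group n). (u, []) \<in> Hsub n}"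

lemma Nsub_normal: "n \<ge> 2 \<Longrightarrow> Nsub n \<lhd> free_group n"
proof -
  assume n2: "n \<ge> 2"
  interpret HS: subgroup "Hsub n" "free_group n \<times>\<times> free_group n" by (rule Hsub_sg[OF n2])
  interpret F: group "free_group n" by (rule grpF)
  have sg: "subgroup (Nsub n) (free_group n)"
  proof (rule F.subgroupI)
    show "Nsub n \<subseteq> carrier (free_group n)" by (auto simp: Nsub_def)
  next
    have "([], []) \<in> Hsub n" using HS.one_closed by (simp add: fg_one)
    then have "[] \<in> Nsub n" by (auto simp: Nsub_def fg_carrier)
    then show "Nsub n \<noteq> {}" by blast
  next
    fix u assume "u \<in> Nsub n"
    then have u: "u \<in> carrier (free_group n)" "(u, []) \<in> Hsub n" by (auto simp: Nsub_def)
    have "inv\<^bsub>free_group n \<times>\<times> free_group n\<^esub> (u, []) \<in> Hsub n" using HS.m_inv_closed u by blast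
    moreover have "inv\<^bsub>free_group n\<^esub> [] = []" using F.inv_one by (simp add: fg_one)
    moreover have "[] \<in> carrier (free_group n)" by (simp add: fg_carrier)
    ultimately show "inv\<^bsub>free_group n\<^esub> u \<in> Nsub n"
      using u inv_DirProd[OF grpF grpF, where g=u and h="[]"] F.inv_closed[OF u(1)] by (simp add: Nsub_def)
  next
    fix u v assume "u \<in> Nsub n" "v \<in> Nsub n"
    then have uv: "u \<in> carrier (free_group n)" "(u, []) \<in> Hsub n" "v \<in> carrier (free_group n)" "(v, []) \<in> Hsub n"
      by (auto simp: Nsub_def)
    have "(u, []) \<otimes>\<^bsub>free_group n \<times>\<times> free_group n\<^esub> (v, []) \<in> Hsub n" using HS.m_closed uv by blast
    moreover have "[] \<otimes>\<^bsub>free_group n\<^esub> [] = []" by (simp add: fg_mult)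
    ultimately show "u \<otimes>\<^bsub>free_group n\<^esub> v \<in> Nsub n" using uv F.m_closed[of u v] by (simp add: Nsub_def)
  qed
  show ?thesis
  proof (subst F.normal_inv_iff, intro conjI ballI sg)
    fix x h assume x: "x \<in> carrier (free_group n)" and h: "h \<in> Nsub n"
    then have hc: "h \<in> carrier (free_group n)" "(h, []) \<in> Hsub n" by (auto simp: Nsub_def)
    have xx: "(x, x) \<in> Hsub n" by (rule diag_in[OF n2 x])
    have "(x, x) \<otimes>\<^bsub>free_group n \<times>\<times> free_group n\<^esub> (h, []) \<otimes>\<^bsub>free_group n \<times>\<times> free_group n\<^esub>
          inv\<^bsub>free_group n \<times>\<times> free_group n\<^esub> (x, x) \<in> Hsub n"
      using xx hc HS.m_closed HS.m_inv_closed by blast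
    moreover have "x \<otimes>\<^bsub>free_group n\<^esub> [] \<otimes>\<^bsub>free_group n\<^esub> inv\<^bsub>free_group n\<^esub> x = []"
    proof -
      have "x \<otimes>\<^bsub>free_group n\<^esub> \<one>\<^bsub>free_group n\<^esub> \<otimes>\<^bsub>free_group n\<^esub> inv\<^bsub>free_group n\<^esub> x = \<one>\<^bsub>free_group n\<^esub>"
        using x by simp
      then show ?thesis by (simp add: fg_one)
    qed
    ultimately show "x \<otimes>\<^bsub>free_group n\<^esub> h \<otimes>\<^bsub>free_group n\<^esub> inv\<^bsub>free_group n\<^esub> x \<in> Nsub n"
      using inv_DirProd[OF grpF grpF x x] x hc by (auto simp: Nsub_def)
  qed
qed


lemma grp_eq_from_inv: "group G \<Longrightarrow> x \<in> carrier G \<Longrightarrow> y \<in> carrier G \<Longrightarrow> x \<otimes>\<^bsub>G\<^esub> inv\<^bsub>G\<^esub> y = \<one>\<^bsub>G\<^esub> \<Longrightarrow> x = y"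
proof -
  assume g: "group G" and x: "x \<in> carrier G" and y: "y \<in> carrier G" and h: "x \<otimes>\<^bsub>G\<^esub> inv\<^bsub>G\<^esub> y = \<one>\<^bsub>G\<^esub>"
  have "inv\<^bsub>G\<^esub> (inv\<^bsub>G\<^esub> y) = x"
    by (rule group.inv_equality[OF g h group.inv_closed[OF g y] x])
  then show "x = y" using group.inv_inv[OF g y] by simp
qed

lemma tors_in:
  assumes n2: "n \<ge> 2"
  shows "(CC (free_group n) bF cF m [^]\<^bsub>free_group n\<^esub> (Suc (Suc m)), []) \<in> Hsub n"
proof -
  interpret N: normal "Nsub n" "free_group n" by (rule Nsub_normal[OF n2])
  define h where "h = (\<lambda>a. Nsub n #>\<^bsub>free_group n\<^esub> a)"
  have ghom: "group_hom (free_group n) (free_group n Mod Nsub n) h"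
    unfolding h_def
    by (intro group_hom.intro grpF N.factorgroup_is_group group_hom_axioms.intro N.r_coset_hom_Mod)
  interpret HM: group_hom "free_group n" "free_group n Mod Nsub n" h by (rule ghom)
  have Qg: "group (free_group n Mod Nsub n)" by (rule N.factorgroup_is_group)
  have b: "bF \<in> carrier (free_group n)" and c: "cF \<in> carrier (free_group n)" using bF_c[OF n2] cF_c[OF n2] by auto
  have rel: "relL (free_group n Mod Nsub n) (h bF) (h cF) i = relR (free_group n Mod Nsub n) (h bF) (h cF) i"
    if "i < 6" for i
  proof -
    let ?r = "relL (free_group n) bF cF i \<otimes>\<^bsub>free_group n\<^esub> inv\<^bsub>free_group n\<^esub> relR (free_group n) bF cF i"
    have rc: "?r \<in> carrier (free_group n)" by (rule rel_c[OF n2])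
    have "(?r, []) \<in> Hsub n" unfolding Hsub_def
      using that by (intro generate.incl) (auto simp: Sset_def relset_def)
    then have "?r \<in> Nsub n" using rc unfolding Nsub_def by blast
    then have "h ?r = Nsub n" unfolding h_def by (rule N.rcos_const[OF grpF])
    then have "h (relL (free_group n) bF cF i) \<otimes>\<^bsub>free_group n Mod Nsub n\<^esub> inv\<^bsub>free_group n Mod Nsub n\<^esub> h (relR (free_group n) bF cF i) = \<one>\<^bsub>free_group n Mod Nsub n\<^esub>"
      using relL_closed[OF grpF b c] relR_closed[OF grpF b c] HM.hom_mult HM.hom_inv
      by (metis N.inv_closed one_FactGroup)
    then have "h (relL (free_group n) bF cF i) = h (relR (free_group n) bF cF i)"
      by (rule grp_eq_from_inv[OF Qg HM.hom_closed[OF relL_closed[OF grpF b c]] HM.hom_closed[OF relR_closed[OF grpF b c]]])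
    then show ?thesis by (simp only: HM.hom_relL[OF b c, symmetric] HM.hom_relR[OF b c, symmetric])
  qed
  have rg: "relgrp (free_group n Mod Nsub n) (h bF) (h cF)"
    by (rule relgrpI[OF Qg]) (use b c rel in auto)
  have "CC (free_group n Mod Nsub n) (h bF) (h cF) m [^]\<^bsub>free_group n Mod Nsub n\<^esub> (Suc (Suc m)) = \<one>\<^bsub>free_group n Mod Nsub n\<^esub>"
    by (rule relgrp.torsion[OF rg])
  moreover have "CC (free_group n Mod Nsub n) (h bF) (h cF) m = h (CC (free_group n) bF cF m)"
    using HM.hom_CC[OF b c, of m] by (simp only:)
  moreover have cc: "CC (free_group n) bF cF m \<in> carrier (free_group n)" using CC_closed[OF grpF b c] by blast
  ultimately have "h (CC (free_group n) bF cF m [^]\<^bsub>free_group n\<^esub> (Suc (Suc m))) = Nsub n"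
    using HM.hom_nat_pow[of "CC (free_group n) bF cF m" "Suc (Suc m)"] one_FactGroup by metis
  moreover have xc: "CC (free_group n) bF cF m [^]\<^bsub>free_group n\<^esub> (Suc (Suc m)) \<in> carrier (free_group n)"
    using cc by (rule N.nat_pow_closed)
  ultimately have "CC (free_group n) bF cF m [^]\<^bsub>free_group n\<^esub> (Suc (Suc m)) \<in> Nsub n"
    using N.rcos_self[OF xc N.subgroup_axioms] unfolding h_def by metis
  then show ?thesis unfolding Nsub_def by blast
qed

lemma pow_pair: "u \<in> carrier (free_group n) \<Longrightarrow> (u, []) [^]\<^bsub>free_group n \<times>\<times> free_group n\<^esub> (k::nat) = (u [^]\<^bsub>free_group n\<^esub> k, [])"
  by (induction k) (simp_all add: fg_one fg_mult)

lemma Ord_CC: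
  assumes n2: "n \<ge> 2"
  shows "Ord_in (free_group n \<times>\<times> free_group n) (Hsub n) (CC (free_group n) bF cF m, []) = Suc (Suc m)"
proof -
  let ?g = "CC (free_group n) bF cF m"
  have gc: "?g \<in> carrier (free_group n)" using CC_closed[OF grpF bF_c[OF n2] cF_c[OF n2]] by blast
  have mem: "(?g, []) [^]\<^bsub>free_group n \<times>\<times> free_group n\<^esub> Suc (Suc m) \<in> Hsub n"
    by (subst pow_pair[OF gc]) (rule tors_in[OF n2])
  have low: "Suc (Suc m) \<le> y" if "y \<ge> 1" "(?g, []) [^]\<^bsub>free_group n \<times>\<times> free_group n\<^esub> y \<in> Hsub n" for y
  proof (rule ccontr)
    assume "\<not> Suc (Suc m) \<le> y"
    then have y: "y \<le> m + 1" by simp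
    have "Phi (?g [^]\<^bsub>free_group n\<^esub> y) = Phi []"
      using Hsub_inv[OF n2 that(2)] pow_pair[OF gc] by simp
    then have "Cs m ^^ y = id" using Phi_pow Phi_CC[OF n2, of m] by simp
    then show False using Cs_order[OF that(1) y] by simp
  qed
  have "(LEAST k::nat. k \<ge> 1 \<and> (?g, []) [^]\<^bsub>free_group n \<times>\<times> free_group n\<^esub> k \<in> Hsub n) = Suc (Suc m)"
    by (rule Least_equality) (use mem low in auto)
  moreover have "\<exists>k::nat\<ge>1. (?g, []) [^]\<^bsub>free_group n \<times>\<times> free_group n\<^esub> k \<in> Hsub n"
    using mem by (intro exI[of _ "Suc (Suc m)"]) simp
  ultimately show ?thesis unfolding Ord_in_def by simp
qed

lemma Ord_b:
  assumes n2: "n \<ge> 2"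
  shows "Ord_in (free_group n \<times>\<times> free_group n) (Hsub n) (bF, []) = 0"
proof -
  have "\<not> (\<exists>k::nat\<ge>1. (bF, []) [^]\<^bsub>free_group n \<times>\<times> free_group n\<^esub> k \<in> Hsub n)"
  proof
    assume "\<exists>k::nat\<ge>1. (bF, []) [^]\<^bsub>free_group n \<times>\<times> free_group n\<^esub> k \<in> Hsub n"
    then obtain k :: nat where k: "k \<ge> 1" "(bF, []) [^]\<^bsub>free_group n \<times>\<times> free_group n\<^esub> k \<in> Hsub n" by blast
    have "Phi (bF [^]\<^bsub>free_group n\<^esub> k) = Phi []"
      using Hsub_inv[OF n2 k(2)] pow_pair[OF bF_c[OF n2]] by simp
    then have "Bm ^^ k = id" using Phi_pow Phi_b[OF n2] by simp
    then show False using Bm_order[OF k(1)] by simp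
  qed
  then show ?thesis unfolding Ord_in_def by (intro if_not_P)
qed

lemma Ord_one:
  assumes n2: "n \<ge> 2"
  shows "Ord_in (free_group n \<times>\<times> free_group n) (Hsub n) ([], []) = 1"
proof -
  have mem: "([], []) [^]\<^bsub>free_group n \<times>\<times> free_group n\<^esub> (1::nat) \<in> Hsub n"
    using subgroup.one_closed[OF Hsub_sg[OF n2]] by (simp add: fg_one fg_mult)
  have "(LEAST k::nat. k \<ge> 1 \<and> ([], []) [^]\<^bsub>free_group n \<times>\<times> free_group n\<^esub> k \<in> Hsub n) = 1"
    by (rule Least_equality) (use mem in auto)
  then show ?thesis using mem unfolding Ord_in_def by auto
qed

lemma spectrum_univ:
  assumes n2: "n \<ge> 2"
  shows "Ord_spectrum (free_group n \<times>\<times> free_group n) (Hsub n) = UNIV"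
proof -
  have "k \<in> Ord_spectrum (free_group n \<times>\<times> free_group n) (Hsub n)" for k
  proof (cases k)
    case 0
    show ?thesis
    proof -
      have "(bF, []) \<in> carrier (free_group n \<times>\<times> free_group n)" using bF_c[OF n2] by (simp add: fg_carrier)
      then show ?thesis using Ord_b[OF n2] 0 unfolding Ord_spectrum_def by (intro image_eqI[where x="(bF, [])"]) auto
    qed
  next
    case (Suc k')
    show ?thesis
    proof (cases k')
      case 0
      have "([], []) \<in> carrier (free_group n \<times>\<times> free_group n)" by (simp add: fg_carrier)
      then show ?thesis using Ord_one[OF n2] Suc 0 unfolding Ord_spectrum_def by (intro image_eqI[where x="([], [])"]) auto
    next
      case (Suc m)
      have "(CC (free_group n) bF cF m, []) \<in> carrier (free_group n \<times>\<times> free_group n)"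
        using CC_closed[OF grpF bF_c[OF n2] cF_c[OF n2]] by (simp add: fg_carrier)
      then show ?thesis using Ord_CC[OF n2, of m] \<open>k = Suc k'\<close> Suc unfolding Ord_spectrum_def by (intro image_eqI[where x="(CC (free_group n) bF cF m, [])"]) auto
    qed
  qed
  then show ?thesis by blast
qed

theorem proposition5p3:
  fixes n :: nat
  assumes "n \<ge> 2"
  shows "(\<exists>H. fin_gen_subgroup (free_group n \<times>\<times> free_group n) H \<and>
              Ord_spectrum (free_group n \<times>\<times> free_group n) H = (UNIV :: nat set))
         \<and> \<not> bounded_subgroup_spectra (free_group n \<times>\<times> free_group n)"
proof -
  have fg: "fin_gen_subgroup (free_group n \<times>\<times> free_group n) (Hsub n)"
    unfolding fin_gen_subgroup_def
    using Hsub_sg[OF assms] Sset_fin Sset_c[OF assms] by (auto simp: Hsub_def)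
  have sp: "Ord_spectrum (free_group n \<times>\<times> free_group n) (Hsub n) = UNIV" by (rule spectrum_univ[OF assms])
  have "\<not> bounded_subgroup_spectra (free_group n \<times>\<times> free_group n)"
  proof
    assume "bounded_subgroup_spectra (free_group n \<times>\<times> free_group n)"
    then obtain B where "\<forall>k \<in> Ord_spectrum (free_group n \<times>\<times> free_group n) (Hsub n). k \<le> B"
      using fg unfolding bounded_subgroup_spectra_def by blast
    then have "Suc B \<le> B" using sp by blast
    then show False by simp
  qed
  then show ?thesis using fg sp by blast
qed


end
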